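(* Fix an integer $n\ge 1$ and $p\in(0,1]$. Let \[ \textsc{Pol}=\Big\{(\mathbf x,\mathbf y)\ge 0:\ x_{1,1}+y_{1,1}=1,\ \ x_{t,s}+y_{t,s}=\tfrac1t\sum_{\sigma=1}^{t-1}\big(y_{t-1,\sigma}+(1-p)x_{t-1,\sigma}\big)\ \ \forall\, t\in\{2,\dots,n\},\ s\in[t]\Big\}, \] where $\mathbf x=(x_{t,s})_{t\in[n],s\in[t]}$ and $\mathbf y=(y_{t,s})_{t\in[n],s\in[t]}$. (i) For every (possibly randomized) policy $\mathcal P$ for the SP-UA, the vector defined by $x_{t,s}=\Pr(\mathcal P \text{ reaches state }(t,s)\text{ and makes an offer})$ and $y_{t,s}=\Pr(\mathcal P\text{ reaches state }(t,s)\text{ and passes})$ belongs to $\textsc{Pol}$. (ii) Conversely, for every $(\mathbf x,\mathbf y)\in\textsc{Pol}$, the randomized policy $\mathcal P$ that in state $(1,1)$ makes an offer with probability $x_{1,1}$, and for $t>1$ in state $(t,s)$ makes an offer with probability \[ \frac{t\,x_{t,s}}{\sum_{\sigma=1}^{t-1}\big(y_{t-1,\sigma}+(1-p)x_{t-1,\sigma}\big)} \] (when the denominator is $0$, the state is reached with probability $0$ and the action there is arbitrary), satisfies $x_{t,s}=\Pr(\mathcal P\text{ reaches }(t,s)\text{ and makes an offer})$ and $y_{t,s}=\Pr(\mathcal P\text{ reaches }(t,s)\text{ and passes})$ for all $t\in[n]$, $s\in[t]$.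
   Context: Secretary problem with uncertain acceptance (SP-UA): fix an integer $n\ge1$ and $p\in(0,1]$. There are $n$ candidates with distinct overall ranks $1,\dots,n$ (rank $1$ is best). They arrive one at a time in an order given by a uniformly random permutation; $R_t\in[n]$ denotes the overall rank of the $t$-th arriving candidate and $r_t\in[t]$ its partial rank, i.e., its rank among the first $t$ arrivals. At each time $t$, the decision maker, having observed $r_1,\dots,r_t$, either makes an offer to the $t$-th candidate or passes, irrevocably; policies may randomize. An offered candidate accepts independently with probability $p$, in which case the process stops; otherwise the process moves to the next candidate. The process ends when an offer is accepted or after candidate $n$. The policy is in state $(t,s)$ when it is examining the $t$-th candidate and $r_t=s$; "reaching state $(t,s)$" means the process has not stopped before time $t$ and $r_t=s$. *)

theory Defs
  imports "HOL-Probability.Probability" "HOL-Combinatorics.Multiset_Permutations"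
begin

(* An arrival order is a list R of length n, a permutation of the overall ranks {1..n};
   R ! (t-1) is the overall rank R_t of the t-th arriving candidate (t is 1-based). *)

definition prank :: "nat list \<Rightarrow> nat \<Rightarrow> nat" where
  "prank R t = card {i \<in> {1..t}. R ! (i - 1) \<le> R ! (t - 1)}"

definition pranks :: "nat list \<Rightarrow> nat list" where
  "pranks R = map (prank R) [1..<length R + 1]"

(* A (randomized, behavioural) policy: given the observed partial ranks r_1..r_t
   and its own past actions at times 1..t-1 (True = offer, False = pass),
   it returns the probability of making an offer to the t-th candidate. *)
type_synonym policy = "nat list \<Rightarrow> bool list \<Rightarrow> real"

definition valid_policy :: "policy \<Rightarrow> bool" where
  "valid_policy P \<longleftrightarrow> (\<forall>rs h. 0 \<le> P rs h \<and> P rs h \<le> 1)"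

(* run p P rs h k : the distribution of the full list of actions taken, given that
   the actions h were taken so far (all offers in h were rejected), the partial ranks
   of all candidates are rs, and k candidates remain.  The list stops growing as soon
   as an offer is accepted (acceptance happens independently with probability p). *)
fun run :: "real \<Rightarrow> policy \<Rightarrow> nat list \<Rightarrow> bool list \<Rightarrow> nat \<Rightarrow> bool list pmf" where
  "run p P rs h 0 = return_pmf h"
| "run p P rs h (Suc k) =
     bind_pmf (bernoulli_pmf (P (take (length h + 1) rs) h)) (\<lambda>a.
       if a then
         bind_pmf (bernoulli_pmf p) (\<lambda>acc.
           if acc then return_pmf (h @ [True]) else run p P rs (h @ [True]) k)
       else run p P rs (h @ [False]) k)"

definition spua :: "nat \<Rightarrow> real \<Rightarrow> policy \<Rightarrow> (nat list \<times> bool list) pmf" where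
  "spua n p P =
     bind_pmf (pmf_of_set (permutations_of_set {1..n})) (\<lambda>R.
       map_pmf (\<lambda>acts. (R, acts)) (run p P (pranks R) [] n))"

definition offer_prob :: "nat \<Rightarrow> real \<Rightarrow> policy \<Rightarrow> nat \<Rightarrow> nat \<Rightarrow> real" where
  "offer_prob n p P t s = measure_pmf.prob (spua n p P)
     {(R, acts). t \<le> length acts \<and> prank R t = s \<and> acts ! (t - 1)}"

definition pass_prob :: "nat \<Rightarrow> real \<Rightarrow> policy \<Rightarrow> nat \<Rightarrow> nat \<Rightarrow> real" where
  "pass_prob n p P t s = measure_pmf.prob (spua n p P)
     {(R, acts). t \<le> length acts \<and> prank R t = s \<and> \<not> acts ! (t - 1)}"

definition in_Pol :: "nat \<Rightarrow> real \<Rightarrow> (nat \<Rightarrow> nat \<Rightarrow> real) \<Rightarrow> (nat \<Rightarrow> nat \<Rightarrow> real) \<Rightarrow> bool" where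
  "in_Pol n p x y \<longleftrightarrow>
     (\<forall>t\<in>{1..n}. \<forall>s\<in>{1..t}. 0 \<le> x t s \<and> 0 \<le> y t s) \<and>
     x 1 1 + y 1 1 = 1 \<and>
     (\<forall>t\<in>{2..n}. \<forall>s\<in>{1..t}.
        x t s + y t s = (1 / real t) * (\<Sum>\<sigma>=1..t-1. y (t-1) \<sigma> + (1 - p) * x (t-1) \<sigma>))"

(* The policy of part (ii); c t s in [0,1] is the arbitrary action used when the
   denominator vanishes.  It depends only on the current state (t, r_t). *)
definition pol_policy :: "real \<Rightarrow> (nat \<Rightarrow> nat \<Rightarrow> real) \<Rightarrow> (nat \<Rightarrow> nat \<Rightarrow> real) \<Rightarrow> (nat \<Rightarrow> nat \<Rightarrow> real) \<Rightarrow> policy" where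
  "pol_policy p x y c rs h =
     (let t = length rs; s = last rs;
          D = (\<Sum>\<sigma>=1..t-1. y (t-1) \<sigma> + (1 - p) * x (t-1) \<sigma>)
      in if t = 1 then x 1 1
         else if D = 0 then c t s
         else real t * x t s / D)"

end

theory Submission
  imports Defs
begin

lemma prob_bind_pmf: "measure_pmf.prob (bind_pmf M N) X = measure_pmf.expectation M (\<lambda>x. measure_pmf.prob (N x) X)"
proof -
  have "ennreal (measure_pmf.prob (bind_pmf M N) X) = emeasure (bind_pmf M N) X"
    by (simp add: measure_pmf.emeasure_eq_measure)
  also have "\<dots> = (\<integral>\<^sup>+x. ennreal (measure_pmf.prob (N x) X) \<partial>M)"
    by (subst emeasure_bind_pmf) (simp add: measure_pmf.emeasure_eq_measure)
  also have "\<dots> = ennreal (measure_pmf.expectation M (\<lambda>x. measure_pmf.prob (N x) X))"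
    by (rule nn_integral_eq_integral) (auto intro!: measure_pmf.integrable_const_bound[where B=1])
  finally show ?thesis by (simp add: integral_nonneg_AE)
qed
definition cl :: "real \<Rightarrow> real" where "cl q = max 0 (min 1 q)"
interpretation pmf_as_function .
lemma pmf_bern_cl: "pmf (bernoulli_pmf q) b = (if b then cl q else 1 - cl q)"
  by transfer (auto simp: cl_def)
lemma prob_bind_bern: "measure_pmf.prob (bind_pmf (bernoulli_pmf q) N) X =
   cl q * measure_pmf.prob (N True) X + (1 - cl q) * measure_pmf.prob (N False) X"
proof -
  have "bernoulli_pmf q = bernoulli_pmf (cl q)"
    by (rule pmf_eqI) (simp add: pmf_bern_cl cl_def)
  then show ?thesis unfolding prob_bind_pmf
    by (simp add: cl_def)
qed

lemma prob_all: "(\<And>a. a \<in> set_pmf M \<Longrightarrow> a \<in> E) \<Longrightarrow> measure_pmf.prob M E = 1"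
proof -
  assume h: "\<And>a. a \<in> set_pmf M \<Longrightarrow> a \<in> E"
  have "measure_pmf.prob M (UNIV - E) = 0" using h by (auto simp: measure_pmf_zero_iff)
  then show ?thesis using measure_pmf.prob_compl[of E M] by simp
qed

lemma prob_none: "(\<And>a. a \<in> set_pmf M \<Longrightarrow> a \<notin> E) \<Longrightarrow> measure_pmf.prob M E = 0"
  by (auto simp: measure_pmf_zero_iff)

lemma run_supp: "a \<in> set_pmf (run p P rs h k) \<Longrightarrow> \<exists>u. a = h @ u \<and> (0 < k \<longrightarrow> u \<noteq> [])"
proof (induction k arbitrary: h)
  case 0 then show ?case by simp
next
  case (Suc k)
  from Suc.prems show ?case
    by (auto split: if_splits dest!: Suc.IH)
qed

lemma run_supp2:
  assumes "a \<in> set_pmf (run p P rs h k)"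
  shows "length h \<le> length a" "0 < k \<Longrightarrow> length h < length a"
    "i < length h \<Longrightarrow> a ! i = h ! i"
  using run_supp[OF assms] by (auto simp: nth_append)

lemma cl_ge: "0 \<le> cl q" and cl_le: "cl q \<le> 1" by (auto simp: cl_def)

lemma run_dep:
  assumes "take (t-1) rs = take (t-1) rs'"
  shows "measure_pmf.prob (run p P rs h k) {a. t \<le> length a} = measure_pmf.prob (run p P rs' h k) {a. t \<le> length a}"
proof (induction k arbitrary: h)
  case 0 then show ?case by simp
next
  case (Suc k)
  show ?case
  proof (cases "t \<le> length h + 1")
    case True
    have "measure_pmf.prob (run p P r h (Suc k)) {a. t \<le> length a} = 1" for r
      by (rule prob_all) (use True in \<open>fastforce dest: run_supp2(2)\<close>)
    then show ?thesis by simp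
  next
    case False
    have eq: "take (Suc (length h)) rs = take (Suc (length h)) rs'"
      using arg_cong[OF assms, of "take (length h + 1)"] False by (simp add: min_def split: if_splits)
    show ?thesis by (simp add: prob_bind_bern Suc.IH eq)
  qed
qed

lemma run_markov:
  assumes "\<And>h. P (take t rs) h = q" "1 \<le> t"
  shows "length h < t \<Longrightarrow> measure_pmf.prob (run p P rs h k) {a. t \<le> length a \<and> a ! (t-1)}
     = cl q * measure_pmf.prob (run p P rs h k) {a. t \<le> length a}"
proof (induction k arbitrary: h)
  case 0 then show ?case by simp
next
  case (Suc k)
  show ?case
  proof (cases "t = length h + 1")
    case True
    have e1: "measure_pmf.prob (run p P rs (h @ [True]) k) {a. t \<le> length a \<and> a ! (t-1)} = 1"
      by (rule prob_all) (use True in \<open>fastforce dest: run_supp2\<close>)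
    have e2: "measure_pmf.prob (run p P rs (h @ [False]) k) {a. t \<le> length a \<and> a ! (t-1)} = 0"
      by (rule prob_none) (use True in \<open>fastforce dest: run_supp2\<close>)
    have e3: "measure_pmf.prob (run p P rs (h @ [b]) k) {a. t \<le> length a} = 1" for b
      by (rule prob_all) (use True in \<open>fastforce dest: run_supp2\<close>)
    have eq: "P (take (length h + 1) rs) h = q" using assms True by simp
    show ?thesis using e1 e2 e3 eq unfolding True by (simp add: prob_bind_bern algebra_simps)
  next
    case False
    with Suc.prems have lt: "length (h @ [b]) < t" for b by simp
    have e0: "measure_pmf.prob (return_pmf (h @ [True])) {a. t \<le> length a \<and> a ! (t-1)} = 0"
         "measure_pmf.prob (return_pmf (h @ [True])) {a. t \<le> length a} = 0"
      using lt[of True] by (auto simp: measure_return indicator_def)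
    show ?thesis using e0 Suc.IH[OF lt[of True]] Suc.IH[OF lt[of False]]
      by (simp add: prob_bind_bern algebra_simps)
  qed
qed

lemma run_step:
  assumes "0 < p" "p \<le> 1"
  shows "length h < t \<Longrightarrow> t < length h + k \<Longrightarrow>
     measure_pmf.prob (run p P rs h k) {a. t + 1 \<le> length a}
     = measure_pmf.prob (run p P rs h k) {a. t \<le> length a \<and> \<not> a ! (t-1)}
       + (1 - p) * measure_pmf.prob (run p P rs h k) {a. t \<le> length a \<and> a ! (t-1)}"
proof (induction k arbitrary: h)
  case 0 then show ?case by simp
next
  case (Suc k)
  have clp: "cl p = p" using assms by (simp add: cl_def)
  show ?case
  proof (cases "t = length h + 1")
    case True
    with Suc.prems have k: "0 < k" by simp
    have e1: "measure_pmf.prob (run p P rs (h @ [True]) k) {a. t \<le> length a \<and> a ! (t-1)} = 1"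
      by (rule prob_all) (use True in \<open>fastforce dest: run_supp2\<close>)
    have e1': "measure_pmf.prob (run p P rs (h @ [True]) k) {a. t \<le> length a \<and> \<not> a ! (t-1)} = 0"
      by (rule prob_none) (use True in \<open>fastforce dest: run_supp2\<close>)
    have e2: "measure_pmf.prob (run p P rs (h @ [False]) k) {a. t \<le> length a \<and> a ! (t-1)} = 0"
      by (rule prob_none) (use True in \<open>fastforce dest: run_supp2\<close>)
    have e2': "measure_pmf.prob (run p P rs (h @ [False]) k) {a. t \<le> length a \<and> \<not> a ! (t-1)} = 1"
      by (rule prob_all) (use True in \<open>fastforce dest: run_supp2\<close>)
    have e3: "measure_pmf.prob (run p P rs (h @ [b]) k) {a. t + 1 \<le> length a} = 1" for b
      by (rule prob_all) (use True k in \<open>fastforce dest: run_supp2\<close>)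
    have e0: "measure_pmf.prob (return_pmf (h @ [True])) {a. t \<le> length a \<and> a ! (t-1)} = 1"
         "measure_pmf.prob (return_pmf (h @ [True])) {a. t \<le> length a \<and> \<not> a ! (t-1)} = 0"
         "measure_pmf.prob (return_pmf (h @ [True])) {a. t + 1 \<le> length a} = 0"
      using True by (auto simp: measure_return indicator_def)
    show ?thesis using e0 e1 e2 e1' e2' e3 clp unfolding True by (simp add: prob_bind_bern algebra_simps)
  next
    case False
    with Suc.prems have lt: "length (h @ [b]) < t" "t < length (h @ [b]) + k" for b by auto
    have e0: "measure_pmf.prob (return_pmf (h @ [True])) {a. t \<le> length a \<and> a ! (t-1)} = 0"
         "measure_pmf.prob (return_pmf (h @ [True])) {a. t \<le> length a \<and> \<not> a ! (t-1)} = 0"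
         "measure_pmf.prob (return_pmf (h @ [True])) {a. t + 1 \<le> length a} = 0"
      using lt(1)[of True] by (auto simp: measure_return indicator_def)
    note I1 = Suc.IH[OF lt[of True]] and I2 = Suc.IH[OF lt[of False]]
    show ?thesis
      apply (simp only: run.simps prob_bind_bern if_True if_False)
      apply (simp only: I1 I2 e0 clp)
      apply (simp add: algebra_simps)
      done
  qed
qed



fun Ssum :: "nat \<Rightarrow> (nat list \<Rightarrow> real) \<Rightarrow> real" where
  "Ssum 0 f = f []"
| "Ssum (Suc m) f = Ssum m (\<lambda>q. \<Sum>s=1..Suc m. f (q @ [s]))"

definition vld :: "nat \<Rightarrow> nat list \<Rightarrow> bool" where
  "vld m q \<longleftrightarrow> length q = m \<and> (\<forall>i<m. 1 \<le> q ! i \<and> q ! i \<le> Suc i)"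

lemma vld_snoc: "vld m q \<Longrightarrow> s \<in> {1..Suc m} \<Longrightarrow> vld (Suc m) (q @ [s])"
  unfolding vld_def by (auto simp: nth_append less_Suc_eq)

lemma Ssum_cong: "(\<And>q. vld m q \<Longrightarrow> f q = g q) \<Longrightarrow> Ssum m f = Ssum m g"
proof (induction m arbitrary: f g)
  case 0 then show ?case by (simp add: vld_def)
next
  case (Suc m)
  show ?case unfolding Ssum.simps by (rule Suc.IH, rule sum.cong, simp_all add: Suc.prems vld_snoc)
qed

lemma Ssum_sum: "Ssum m (\<lambda>q. \<Sum>x\<in>S. g x q) = (\<Sum>x\<in>S. Ssum m (g x))"
proof (induction m arbitrary: g)
  case 0 then show ?case by simp
next
  case (Suc m)
  have "Ssum (Suc m) (\<lambda>q. \<Sum>x\<in>S. g x q) = Ssum m (\<lambda>q. \<Sum>x\<in>S. \<Sum>s=1..Suc m. g x (q @ [s]))"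
    by (simp add: sum.swap[of _ S])
  also have "\<dots> = (\<Sum>x\<in>S. Ssum (Suc m) (g x))" by (simp add: Suc.IH)
  finally show ?case .
qed

lemma Ssum_mult: "Ssum m (\<lambda>q. c * f q) = c * Ssum m f"
proof (induction m arbitrary: f)
  case 0 then show ?case by simp
next
  case (Suc m) then show ?case by (simp only: Ssum.simps sum_distrib_left[symmetric])
qed

lemma Ssum_add: "Ssum m (\<lambda>q. f q + g q) = Ssum m f + Ssum m g"
proof (induction m arbitrary: f g)
  case 0 then show ?case by simp
next
  case (Suc m) then show ?case by (simp only: Ssum.simps sum.distrib)
qed

lemma Ssum_indep:
  assumes "1 \<le> t" "t \<le> n" "s \<in> {1..t}"
  shows "Ssum n (\<lambda>rs. if rs ! (t-1) = s then g (take (t-1) rs) else 0) = Ssum n (\<lambda>rs. g (take (t-1) rs)) / t"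
  using assms
proof (induction n)
  case 0 then show ?case by simp
next
  case (Suc m)
  show ?case
  proof (cases "t = Suc m")
    case True
    have "Ssum (Suc m) (\<lambda>rs. if rs ! (t-1) = s then g (take (t-1) rs) else 0) = Ssum m g"
      using Suc.prems True
      by (simp, intro Ssum_cong) (simp add: vld_def nth_append)
    moreover have "Ssum (Suc m) (\<lambda>rs. g (take (t-1) rs)) = Ssum m (\<lambda>q. real (Suc m) * g q)"
      using True by (simp, intro Ssum_cong) (simp add: vld_def algebra_simps)
    ultimately show ?thesis using True by (simp only: Ssum_mult) simp
  next
    case False
    with Suc.prems have tm: "t \<le> m" by simp
    have t1: "t - Suc 0 < m" using tm Suc.prems by auto
    have "Ssum (Suc m) (\<lambda>rs. if rs ! (t-1) = s then g (take (t-1) rs) else 0)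
        = Ssum m (\<lambda>q. real (Suc m) * (if q ! (t-1) = s then g (take (t-1) q) else 0))"
      using tm t1 Suc.prems by (simp, intro Ssum_cong) (simp add: vld_def nth_append algebra_simps)
    moreover have "Ssum (Suc m) (\<lambda>rs. g (take (t-1) rs)) = Ssum m (\<lambda>q. real (Suc m) * g (take (t-1) q))"
      using tm Suc.prems by (simp, intro Ssum_cong) (simp add: vld_def algebra_simps)
    ultimately show ?thesis using Suc.IH tm Suc.prems by (simp only: Ssum_mult) simp
  qed
qed

definition rk :: "nat set \<Rightarrow> nat \<Rightarrow> nat" where "rk A x = card {a\<in>A. a \<le> x}"

lemma rk_bij: assumes "finite A" shows "bij_betw (rk A) A {1..card A}"
proof -
  have mono: "rk A x < rk A y" if "x \<in> A" "y \<in> A" "x < y" for x y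
  proof -
    have "{a\<in>A. a \<le> x} \<subset> {a\<in>A. a \<le> y}" using that by force
    then show ?thesis unfolding rk_def using assms by (intro psubset_card_mono) auto
  qed
  have inj: "inj_on (rk A) A"
    by (rule inj_onI) (metis mono less_irrefl nat_neq_iff)
  have sub: "rk A ` A \<subseteq> {1..card A}"
  proof
    fix y assume "y \<in> rk A ` A"
    then obtain x where x: "x \<in> A" "y = rk A x" by auto
    have "{a\<in>A. a \<le> x} \<noteq> {}" using x by auto
    then have "1 \<le> y" using x assms by (simp add: rk_def card_gt_0_iff Suc_le_eq)
    moreover have "card {a\<in>A. a \<le> x} \<le> card A" using assms by (intro card_mono) auto
    then have "y \<le> card A" using x by (simp add: rk_def)
    ultimately show "y \<in> {1..card A}" by simp
  qed
  have "card (rk A ` A) = card {1..card A}" using card_image[OF inj] by simp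
  then have "rk A ` A = {1..card A}" using sub by (intro card_subset_eq) auto
  then show ?thesis using inj by (simp add: bij_betw_def)
qed

lemma card_idx:
  assumes "distinct R"
  shows "card {j\<in>{1..length R}. Q (R ! (j-1))} = card {a\<in>set R. Q a}"
proof -
  have inj: "inj_on (\<lambda>j. R ! (j-1)) {j\<in>{1..length R}. Q (R ! (j-1))}"
    using assms by (auto intro!: inj_onI simp: nth_eq_iff_index_eq)
  have "(\<lambda>j. R ! (j-1)) ` {j\<in>{1..length R}. Q (R ! (j-1))} = {a\<in>set R. Q a}"
  proof
    show "(\<lambda>j. R ! (j-1)) ` {j\<in>{1..length R}. Q (R ! (j-1))} \<subseteq> {a\<in>set R. Q a}"
    proof
      fix a assume "a \<in> (\<lambda>j. R ! (j-1)) ` {j\<in>{1..length R}. Q (R ! (j-1))}"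
      then obtain j where j: "1 \<le> j" "j \<le> length R" "Q (R ! (j-1))" "a = R ! (j-1)" by auto
      then have "j - 1 < length R" by simp
      then show "a \<in> {a\<in>set R. Q a}" using j by simp
    qed
    show "{a\<in>set R. Q a} \<subseteq> (\<lambda>j. R ! (j-1)) ` {j\<in>{1..length R}. Q (R ! (j-1))}"
    proof
      fix a assume "a \<in> {a\<in>set R. Q a}"
      then obtain i where i: "i < length R" "R ! i = a" "Q a" by (auto simp: in_set_conv_nth)
      show "a \<in> (\<lambda>j. R ! (j-1)) ` {j\<in>{1..length R}. Q (R ! (j-1))}"
        by (rule image_eqI[where x="Suc i"]) (use i in auto)
    qed
  qed
  then show ?thesis using card_image[OF inj] by simp
qed

lemma pranks_snoc:
  assumes "distinct (xs @ [x])"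
  shows "pranks (xs @ [x]) = pranks xs @ [card {a\<in>set (xs @ [x]). a \<le> x}]"
proof -
  have "prank (xs @ [x]) i = prank xs i" if "i \<in> set [1..<length xs + 1]" for i
    unfolding prank_def using that by (intro arg_cong[where f=card] Collect_cong) (auto simp: nth_append)
  moreover have "prank (xs @ [x]) (length xs + 1) = card {a\<in>set (xs @ [x]). a \<le> x}"
    unfolding prank_def using card_idx[OF assms, of "\<lambda>a. a \<le> x"] by simp
  ultimately show ?thesis unfolding pranks_def by simp
qed

lemma perm_decomp:
  assumes "finite A" "A \<noteq> {}"
  shows "(\<Sum>R\<in>permutations_of_set A. F R) = (\<Sum>x\<in>A. \<Sum>xs\<in>permutations_of_set (A - {x}). F (xs @ [x]))"
proof -
  have "(\<Sum>R\<in>permutations_of_set A. F R) = (\<Sum>(x,xs)\<in>Sigma A (\<lambda>x. permutations_of_set (A - {x})). F (xs @ [x]))"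
  proof (rule sum.reindex_bij_witness[where i="\<lambda>b. snd b @ [fst b]" and j="\<lambda>R. (last R, butlast R)"])
    fix R assume R: "R \<in> permutations_of_set A"
    then have ne: "R \<noteq> []" using assms by (auto dest: permutations_of_setD)
    show "snd (last R, butlast R) @ [fst (last R, butlast R)] = R" using ne by simp
    have d: "distinct R" "set R = A" using R by (auto dest: permutations_of_setD)
    have "set (butlast R) = A - {last R}"
    proof -
      have R: "butlast R @ [last R] = R" using ne by simp
      have "distinct (butlast R @ [last R])" using d(1) R by simp
      then have "last R \<notin> set (butlast R)" by simp
      moreover have "set R = insert (last R) (set (butlast R))"
        using arg_cong[OF R, of set] by auto
      ultimately show ?thesis using d(2) by auto
    qed
    moreover have "last R \<in> A" using d ne by auto
    moreover have "distinct (butlast R)" using d(1) by (simp add: distinct_butlast)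
    ultimately show "(last R, butlast R) \<in> Sigma A (\<lambda>x. permutations_of_set (A - {x}))"
      by (intro SigmaI permutations_of_setI)
    show "(case (last R, butlast R) of (x, xs) \<Rightarrow> F (xs @ [x])) = F R" using ne by simp
  next
    fix b assume "b \<in> Sigma A (\<lambda>x. permutations_of_set (A - {x}))"
    then show "(last (snd b @ [fst b]), butlast (snd b @ [fst b])) = b"
      by (cases b) simp
    from \<open>b \<in> _\<close> show "snd b @ [fst b] \<in> permutations_of_set A"
      by (cases b) (auto simp: permutations_of_set_def)
  qed
  also have "\<dots> = (\<Sum>x\<in>A. \<Sum>xs\<in>permutations_of_set (A - {x}). F (xs @ [x]))"
    using assms by (subst sum.Sigma) auto
  finally show ?thesis .
qed

lemma perm_Ssum: "finite A \<Longrightarrow> card A = m \<Longrightarrow> (\<Sum>R\<in>permutations_of_set A. f (pranks R)) = Ssum m f"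
proof (induction m arbitrary: A f)
  case 0 then show ?case by (simp add: pranks_def)
next
  case (Suc m)
  then have ne: "A \<noteq> {}" by auto
  have "(\<Sum>R\<in>permutations_of_set A. f (pranks R))
      = (\<Sum>x\<in>A. \<Sum>xs\<in>permutations_of_set (A - {x}). f (pranks (xs @ [x])))"
    by (rule perm_decomp[OF Suc.prems(1) ne])
  also have "\<dots> = (\<Sum>x\<in>A. \<Sum>xs\<in>permutations_of_set (A - {x}). f (pranks xs @ [rk A x]))"
  proof (intro sum.cong refl)
    fix x xs assume "x \<in> A" "xs \<in> permutations_of_set (A - {x})"
    then have "distinct (xs @ [x])" "set (xs @ [x]) = A" by (auto simp: permutations_of_set_def)
    then show "f (pranks (xs @ [x])) = f (pranks xs @ [rk A x])"
      by (simp add: pranks_snoc rk_def)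
  qed
  also have "\<dots> = (\<Sum>x\<in>A. Ssum m (\<lambda>q. f (q @ [rk A x])))"
    using Suc.prems by (intro sum.cong refl Suc.IH) auto
  also have "\<dots> = Ssum m (\<lambda>q. \<Sum>x\<in>A. f (q @ [rk A x]))" by (simp add: Ssum_sum)
  also have "\<dots> = Ssum m (\<lambda>q. \<Sum>s=1..Suc m. f (q @ [s]))"
  proof -
    have "(\<Sum>x\<in>A. f (q @ [rk A x])) = (\<Sum>s=1..Suc m. f (q @ [s]))" for q
      using sum.reindex_bij_betw[OF rk_bij[OF Suc.prems(1)], of "\<lambda>s. f (q @ [s])"] Suc.prems by simp
    then show ?thesis by (simp only:)
  qed
  finally show ?case by simp
qed



definition Fr :: "nat \<Rightarrow> real \<Rightarrow> policy \<Rightarrow> nat list \<Rightarrow> nat \<Rightarrow> real" where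
  "Fr n p P rs t = measure_pmf.prob (run p P rs [] n) {a. t \<le> length a}"
definition Orr :: "nat \<Rightarrow> real \<Rightarrow> policy \<Rightarrow> nat list \<Rightarrow> nat \<Rightarrow> real" where
  "Orr n p P rs t = measure_pmf.prob (run p P rs [] n) {a. t \<le> length a \<and> a ! (t-1)}"
definition Pas :: "nat \<Rightarrow> real \<Rightarrow> policy \<Rightarrow> nat list \<Rightarrow> nat \<Rightarrow> real" where
  "Pas n p P rs t = measure_pmf.prob (run p P rs [] n) {a. t \<le> length a \<and> \<not> a ! (t-1)}"
definition NN :: "nat \<Rightarrow> real" where "NN n = real (card (permutations_of_set {1..n}))"
definition Reach :: "nat \<Rightarrow> real \<Rightarrow> policy \<Rightarrow> nat \<Rightarrow> real" where
  "Reach n p P t = Ssum n (\<lambda>rs. Fr n p P rs t) / NN n"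

lemma NN_pos: "0 < NN n" by (simp add: NN_def)

lemma spua_prob:
  "measure_pmf.prob (spua n p P) E =
   (\<Sum>R\<in>permutations_of_set {1..n}. measure_pmf.prob (run p P (pranks R) [] n) {a. (R, a) \<in> E}) / NN n"
  unfolding spua_def prob_bind_pmf NN_def
  by (subst integral_pmf_of_set) (auto simp: vimage_def)

lemma pranks_nth: "1 \<le> t \<Longrightarrow> t \<le> length R \<Longrightarrow> pranks R ! (t-1) = prank R t"
  unfolding pranks_def by (simp add: nth_upt del: upt_Suc)

lemma prob_cond: "measure_pmf.prob M {a. A a \<and> c \<and> B a} = (if c then measure_pmf.prob M {a. A a \<and> B a} else 0)"
  by (cases c) simp_all

lemma perm_len: "R \<in> permutations_of_set {1..n} \<Longrightarrow> length R = n"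
  using length_finite_permutations_of_set by fastforce

lemma pranks_nth_perm: "R \<in> permutations_of_set {1..n} \<Longrightarrow> 1 \<le> t \<Longrightarrow> t \<le> n \<Longrightarrow> prank R t = pranks R ! (t-1)"
  using pranks_nth perm_len by metis

lemma off_formula:
  assumes "1 \<le> t" "t \<le> n"
  shows "offer_prob n p P t s = Ssum n (\<lambda>rs. if rs ! (t-1) = s then Orr n p P rs t else 0) / NN n"
proof -
  have "offer_prob n p P t s = (\<Sum>R\<in>permutations_of_set {1..n}. (\<lambda>rs. if rs ! (t-1) = s then Orr n p P rs t else 0) (pranks R)) / NN n"
    unfolding offer_prob_def spua_prob
    by (intro arg_cong2[where f="(/)"] sum.cong refl) (use assms in \<open>auto simp: pranks_nth_perm Orr_def prob_cond\<close>)
  also have "\<dots> = Ssum n (\<lambda>rs. if rs ! (t-1) = s then Orr n p P rs t else 0) / NN n"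
    by (subst perm_Ssum) auto
  finally show ?thesis .
qed

lemma pass_formula:
  assumes "1 \<le> t" "t \<le> n"
  shows "pass_prob n p P t s = Ssum n (\<lambda>rs. if rs ! (t-1) = s then Pas n p P rs t else 0) / NN n"
proof -
  have "pass_prob n p P t s = (\<Sum>R\<in>permutations_of_set {1..n}. (\<lambda>rs. if rs ! (t-1) = s then Pas n p P rs t else 0) (pranks R)) / NN n"
    unfolding pass_prob_def spua_prob
    by (intro arg_cong2[where f="(/)"] sum.cong refl) (use assms in \<open>auto simp: pranks_nth_perm Pas_def prob_cond\<close>)
  also have "\<dots> = Ssum n (\<lambda>rs. if rs ! (t-1) = s then Pas n p P rs t else 0) / NN n"
    by (subst perm_Ssum) auto
  finally show ?thesis .
qed

lemma Orr_Pas: "Orr n p P rs t + Pas n p P rs t = Fr n p P rs t"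
proof -
  have "Fr n p P rs t = measure_pmf.prob (run p P rs [] n)
     ({a. t \<le> length a \<and> a ! (t-1)} \<union> {a. t \<le> length a \<and> \<not> a ! (t-1)})"
    unfolding Fr_def by (rule arg_cong[where f="measure_pmf.prob _"]) auto
  also have "\<dots> = Orr n p P rs t + Pas n p P rs t"
    unfolding Orr_def Pas_def by (rule measure_pmf.finite_measure_Union) auto
  finally show ?thesis by simp
qed

lemma Fr_take: "Fr n p P rs t = Fr n p P (take (t-1) rs) t"
  unfolding Fr_def by (rule run_dep) simp

lemma Fr_take': "Orr n p P rs t + Pas n p P rs t = Fr n p P (take (t-1) rs) t"
  using Orr_Pas Fr_take by metis

lemma sum_prob:
  assumes "1 \<le> t" "t \<le> n" "s \<in> {1..t}"
  shows "offer_prob n p P t s + pass_prob n p P t s = Reach n p P t / t"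
proof -
  have "offer_prob n p P t s + pass_prob n p P t s
      = Ssum n (\<lambda>rs. if rs ! (t-1) = s then Fr n p P (take (t-1) rs) t else 0) / NN n"
    unfolding off_formula[OF assms(1,2)] pass_formula[OF assms(1,2)] add_divide_distrib[symmetric]
      Ssum_add[symmetric]
    by (rule arg_cong[where f="\<lambda>x. x / NN n"], rule arg_cong[where f="Ssum n"])
       (auto simp: fun_eq_iff Fr_take')
  also have "\<dots> = Ssum n (\<lambda>rs. Fr n p P (take (t-1) rs) t) / t / NN n"
    by (subst Ssum_indep[OF assms]) simp
  also have "\<dots> = Reach n p P t / t"
    unfolding Reach_def Fr_take[symmetric] by simp
  finally show ?thesis .
qed

lemma Reach_1: assumes "1 \<le> n" shows "Reach n p P 1 = 1"
proof -
  have "Fr n p P rs 1 = 1" for rs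
    unfolding Fr_def
  proof (rule prob_all)
    fix a assume "a \<in> set_pmf (run p P rs [] n)"
    from run_supp2(2)[OF this] assms show "a \<in> {a. 1 \<le> length a}" by (auto simp: Suc_le_eq)
  qed
  then have "Ssum n (\<lambda>rs. Fr n p P rs 1) = (\<Sum>R\<in>permutations_of_set {1..n}. (\<lambda>_. 1) (pranks R))"
    by (subst perm_Ssum) auto
  then show ?thesis unfolding Reach_def NN_def by simp
qed

lemma Reach_step:
  assumes "1 \<le> t" "t < n" "0 < p" "p \<le> 1"
  shows "Reach n p P (t+1) = (\<Sum>\<sigma>=1..t. pass_prob n p P t \<sigma> + (1 - p) * offer_prob n p P t \<sigma>)"
proof -
  have "Ssum n (\<lambda>rs. Fr n p P rs (t+1))
     = Ssum n (\<lambda>rs. \<Sum>\<sigma>=1..t. (if rs ! (t-1) = \<sigma> then Pas n p P rs t else 0)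
                         + (1 - p) * (if rs ! (t-1) = \<sigma> then Orr n p P rs t else 0))"
  proof (rule Ssum_cong)
    fix q assume q: "vld n q"
    have all: "\<And>i. i<n \<Longrightarrow> 1 \<le> q ! i \<and> q ! i \<le> Suc i" using q unfolding vld_def by auto
    have "1 \<le> q!(t-1) \<and> q!(t-1) \<le> Suc (t-1)" by (rule all) (use assms in simp)
    then have r: "q ! (t-1) \<in> {1..t}" using assms by auto
    have "Fr n p P q (t+1) = Pas n p P q t + (1 - p) * Orr n p P q t"
      unfolding Fr_def Pas_def Orr_def using run_step[OF assms(3,4), of "[]" t n P q] assms by simp
    also have "\<dots> = (\<Sum>\<sigma>=1..t. (if q ! (t-1) = \<sigma> then Pas n p P q t else 0)
                         + (1 - p) * (if q ! (t-1) = \<sigma> then Orr n p P q t else 0))"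
    proof -
      have "Pas n p P q t + (1 - p) * Orr n p P q t =
         (\<Sum>\<sigma>=1..t. if q ! (t-1) = \<sigma> then Pas n p P q t + (1 - p) * Orr n p P q t else 0)"
        using r by simp
      also have "\<dots> = (\<Sum>\<sigma>=1..t. (if q ! (t-1) = \<sigma> then Pas n p P q t else 0)
                         + (1 - p) * (if q ! (t-1) = \<sigma> then Orr n p P q t else 0))"
        by (rule sum.cong) auto
      finally show ?thesis .
    qed
    finally show "Fr n p P q (t+1) = \<dots>" .
  qed
  also have "\<dots> = (\<Sum>\<sigma>=1..t. Ssum n (\<lambda>rs. if rs ! (t-1) = \<sigma> then Pas n p P rs t else 0)
        + (1 - p) * Ssum n (\<lambda>rs. if rs ! (t-1) = \<sigma> then Orr n p P rs t else 0))"
    by (simp only: Ssum_sum Ssum_add Ssum_mult)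
  also have "\<dots> = (\<Sum>\<sigma>=1..t. NN n * (pass_prob n p P t \<sigma> + (1 - p) * offer_prob n p P t \<sigma>))"
  proof (intro sum.cong refl)
    fix \<sigma>
    have tn: "t \<le> n" using assms by simp
    show "Ssum n (\<lambda>rs. if rs ! (t-1) = \<sigma> then Pas n p P rs t else 0)
        + (1 - p) * Ssum n (\<lambda>rs. if rs ! (t-1) = \<sigma> then Orr n p P rs t else 0)
        = NN n * (pass_prob n p P t \<sigma> + (1 - p) * offer_prob n p P t \<sigma>)"
      unfolding off_formula[OF assms(1) tn] pass_formula[OF assms(1) tn]
      using NN_pos[of n] by (simp add: field_simps)
  qed
  finally show ?thesis unfolding Reach_def using NN_pos[of n]
    by (simp add: sum_distrib_left[symmetric])
qed

lemma off_markov: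
  assumes "1 \<le> t" "t \<le> n" "s \<in> {1..t}"
    and mk: "\<And>rs h. length rs = t \<Longrightarrow> P rs h = \<phi> (last rs)"
  shows "offer_prob n p P t s = cl (\<phi> s) * (Reach n p P t / t)"
proof -
  have "Ssum n (\<lambda>rs. if rs ! (t-1) = s then Orr n p P rs t else 0)
      = Ssum n (\<lambda>rs. cl (\<phi> s) * (if rs ! (t-1) = s then Fr n p P (take (t-1) rs) t else 0))"
  proof (rule Ssum_cong)
    fix q assume "vld n q"
    then have lq: "length q = n" by (simp add: vld_def)
    have t1: "1 \<le> t" "t \<le> length q" using assms lq by auto
    then have ne: "take t q \<noteq> []" by auto
    have lt: "last (take t q) = q ! (t-1)" using t1
      by (simp add: last_conv_nth[OF ne] min_def)
    have "Orr n p P q t = cl (\<phi> (q ! (t-1))) * Fr n p P q t"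
      unfolding Orr_def Fr_def
      by (rule run_markov) (use assms lq lt in auto)
    then show "(if q ! (t-1) = s then Orr n p P q t else 0)
      = cl (\<phi> s) * (if q ! (t-1) = s then Fr n p P (take (t-1) q) t else 0)"
      using Fr_take by auto
  qed
  also have "\<dots> = cl (\<phi> s) * (Ssum n (\<lambda>rs. Fr n p P (take (t-1) rs) t) / t)"
    using Ssum_indep[OF assms(1-3), of "\<lambda>q. Fr n p P q t"] by (simp only: Ssum_mult)
  finally show ?thesis
    unfolding off_formula[OF assms(1,2)] Reach_def Fr_take[symmetric] by simp
qed

lemma pol_policy_len:
  "length rs = t \<Longrightarrow> pol_policy p x y c rs h =
     (if t = 1 then x 1 1
      else if (\<Sum>\<sigma>=1..t-1. y (t-1) \<sigma> + (1 - p) * x (t-1) \<sigma>) = 0 then c t (last rs)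
      else real t * x t (last rs) / (\<Sum>\<sigma>=1..t-1. y (t-1) \<sigma> + (1 - p) * x (t-1) \<sigma>))"
  unfolding pol_policy_def Let_def by simp

theorem theorem1:
  fixes n :: nat and p :: real
  assumes "1 \<le> n" and "0 < p" and "p \<le> 1"
  shows "(\<forall>P. valid_policy P \<longrightarrow>
            in_Pol n p (offer_prob n p P) (pass_prob n p P)) \<and>
         (\<forall>x y c. in_Pol n p x y \<longrightarrow> (\<forall>t s. 0 \<le> c t s \<and> c t s \<le> 1) \<longrightarrow>
            (\<forall>t\<in>{1..n}. \<forall>s\<in>{1..t}.
               x t s = offer_prob n p (pol_policy p x y c) t s \<and>
               y t s = pass_prob n p (pol_policy p x y c) t s))"
proof (intro conjI allI impI)
  fix P :: policy
  have nn: "0 \<le> offer_prob n p P t s" "0 \<le> pass_prob n p P t s" for t s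
    by (simp_all add: offer_prob_def pass_prob_def)
  have e1: "offer_prob n p P 1 1 + pass_prob n p P 1 1 = 1"
    using sum_prob[of 1 n 1 p P] Reach_1[OF assms(1)] assms(1) by simp
  have e2: "offer_prob n p P t s + pass_prob n p P t s =
        (1 / real t) * (\<Sum>\<sigma>=1..t-1. pass_prob n p P (t-1) \<sigma> + (1 - p) * offer_prob n p P (t-1) \<sigma>)"
    if "t \<in> {2..n}" "s \<in> {1..t}" for t s
  proof -
    have "Reach n p P t = Reach n p P ((t-1)+1)" using that by simp
    also have "\<dots> = (\<Sum>\<sigma>=1..t-1. pass_prob n p P (t-1) \<sigma> + (1 - p) * offer_prob n p P (t-1) \<sigma>)"
      by (rule Reach_step) (use that assms in auto)
    finally show ?thesis using sum_prob[of t n s p P] that by simp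
  qed
  show "in_Pol n p (offer_prob n p P) (pass_prob n p P)"
    unfolding in_Pol_def using nn e1 e2 by (simp add: add.commute)
next
  fix x y c :: "nat \<Rightarrow> nat \<Rightarrow> real"
  assume pol: "in_Pol n p x y" and cb: "\<forall>t s. 0 \<le> c t s \<and> c t s \<le> 1"
  define P where "P = pol_policy p x y c"
  define D where "D t = (\<Sum>\<sigma>=1..t-1. y (t-1) \<sigma> + (1 - p) * x (t-1) \<sigma>)" for t
  from pol have nonneg: "\<And>t s. t \<in> {1..n} \<Longrightarrow> s \<in> {1..t} \<Longrightarrow> 0 \<le> x t s \<and> 0 \<le> y t s"
    and e11: "x 1 1 + y 1 1 = 1"
    and et: "\<And>t s. t \<in> {2..n} \<Longrightarrow> s \<in> {1..t} \<Longrightarrow> x t s + y t s = (1 / real t) * D t"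
    unfolding in_Pol_def D_def by auto
  have main: "1 \<le> t \<longrightarrow> t \<le> n \<longrightarrow> (\<forall>s\<in>{1..t}. x t s = offer_prob n p P t s \<and> y t s = pass_prob n p P t s)" for t
  proof (induction t)
    case 0 then show ?case by simp
  next
    case (Suc t)
    show ?case
    proof (intro impI ballI)
      fix s assume t1: "1 \<le> Suc t" and tn: "Suc t \<le> n" and s: "s \<in> {1..Suc t}"
      have mk: "\<And>rs h. length rs = Suc t \<Longrightarrow> P rs h =
        (if Suc t = 1 then x 1 1 else if D (Suc t) = 0 then c (Suc t) (last rs)
         else real (Suc t) * x (Suc t) (last rs) / D (Suc t))"
        unfolding P_def D_def by (rule pol_policy_len)
      have off: "offer_prob n p P (Suc t) s = cl (if Suc t = 1 then x 1 1 else if D (Suc t) = 0 then c (Suc t) s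
         else real (Suc t) * x (Suc t) s / D (Suc t)) * (Reach n p P (Suc t) / Suc t)"
        by (rule off_markov[where \<phi>="\<lambda>l. if Suc t = 1 then x 1 1 else if D (Suc t) = 0 then c (Suc t) l
         else real (Suc t) * x (Suc t) l / D (Suc t)", OF t1 tn s mk])
      have sm: "offer_prob n p P (Suc t) s + pass_prob n p P (Suc t) s = Reach n p P (Suc t) / Suc t"
        by (rule sum_prob[OF t1 tn s])
      show "x (Suc t) s = offer_prob n p P (Suc t) s \<and> y (Suc t) s = pass_prob n p P (Suc t) s"
      proof (cases "t = 0")
        case True
        then have s1: "s = 1" using s by simp
        have "0 \<le> x 1 1" "0 \<le> y 1 1" using nonneg[of 1 1] assms(1) by auto
        then have "cl (x 1 1) = x 1 1" using e11 by (simp add: cl_def)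
        then show ?thesis using off sm True s1 Reach_1[OF assms(1)] e11 by simp
      next
        case False
        then have IH: "\<forall>s\<in>{1..t}. x t s = offer_prob n p P t s \<and> y t s = pass_prob n p P t s"
          using Suc.IH tn by simp
        have R: "Reach n p P (Suc t) = D (Suc t)"
        proof -
          have "Reach n p P (Suc t) = (\<Sum>\<sigma>=1..t. pass_prob n p P t \<sigma> + (1 - p) * offer_prob n p P t \<sigma>)"
            using Reach_step[of t n p P] False tn assms by simp
          also have "\<dots> = D (Suc t)" unfolding D_def using IH by (intro sum.cong) auto
          finally show ?thesis .
        qed
        have st: "Suc t \<in> {2..n}" using False tn by auto
        have xy: "x (Suc t) s + y (Suc t) s = D (Suc t) / real (Suc t)" using et[OF st s] by simp
        have xy0: "0 \<le> x (Suc t) s" "0 \<le> y (Suc t) s" using nonneg[of "Suc t" s] st s by auto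
        have D0: "0 \<le> D (Suc t)" unfolding D_def
          using nonneg assms tn by (intro sum_nonneg) (auto intro!: add_nonneg_nonneg mult_nonneg_nonneg)
        show ?thesis
        proof (cases "D (Suc t) = 0")
          case True
          then have "x (Suc t) s = 0" "y (Suc t) s = 0" using xy xy0 by auto
          then show ?thesis using off sm R True False by simp
        next
          case Dn: False
          then have Dp: "0 < D (Suc t)" using D0 by simp
          have h: "real (Suc t) * (x (Suc t) s + y (Suc t) s) = D (Suc t)"
            using xy by (simp add: field_simps)
          have "real (Suc t) * x (Suc t) s \<le> real (Suc t) * (x (Suc t) s + y (Suc t) s)"
            using xy0 by (intro mult_left_mono) auto
          then have "real (Suc t) * x (Suc t) s \<le> D (Suc t)" using h by linarith
          then have le: "real (Suc t) * x (Suc t) s / D (Suc t) \<le> 1"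
            using Dp by (simp add: pos_divide_le_eq)
          have ge: "0 \<le> real (Suc t) * x (Suc t) s / D (Suc t)" using xy0 Dp by simp
          have o: "offer_prob n p P (Suc t) s = x (Suc t) s"
            using off R Dn False le ge Dp by (simp add: cl_def)
          then show ?thesis using sm R xy by simp
        qed
      qed
    qed
  qed
  show "\<forall>t\<in>{1..n}. \<forall>s\<in>{1..t}. x t s = offer_prob n p (pol_policy p x y c) t s \<and>
               y t s = pass_prob n p (pol_policy p x y c) t s"
    using main unfolding P_def by auto
qed


end
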